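(* Let $t_1, t_2 \in \mathcal{L}_r$ with $t_1 =_{\mathcal{L}} t_2$. Then for all finite $E \subseteq \mathcal{X}$ and $S \in \mathbb{N}$: $B(E, S)$ is one of the sublevels of $t_1$ if and only if $B(E, S)$ is one of the sublevels of $t_2$.
   Context: $\mathcal{X}$ is a countable set of variables; a valuation is $\sigma\colon\mathcal{X}\to\mathbb{N}$. For finite $E\subseteq\mathcal{X}$, $x\in\mathcal{X}$, $S\in\mathbb{N}$, the sublevels $A(E,x,S)$ and $B(E,S)$ have values $[A(E,x,S)]_\sigma = 0$ if some $y\in E$ has $\sigma(y)=0$, and $\sigma(x)+S$ otherwise; $[B(E,S)]_\sigma=0$ if some $y\in E$ has $\sigma(y)=0$, and $S$ otherwise. $\mathcal{L}_s$ is the set of sublevels $A(E,x,S)$ with $x\in E$ and $B(E,S)$ with $S>0$. $t_1\leqslant_{\mathcal{L}} t_2$ (resp. $t_1 =_{\mathcal{L}} t_2$) means $[t_1]_\sigma\le[t_2]_\sigma$ (resp. $=$) for every valuation $\sigma$; $\max$ of a finite family is evaluated pointwise (empty max has value $0$). Two sublevels $u,v$ are incomparable if neither $u\leqslant_{\mathcal{L}} v$ nor $v\leqslant_{\mathcal{L}} u$. A minimal representation is a formal expression $\max(u_1,\ldots,u_n)$ where $\{u_1,\ldots,u_n\}$ is a finite set of elements of $\mathcal{L}_s$ that are pairwise incomparable; $\mathcal{L}_r$ is the set of minimal representations, and the $u_i$ are called its sublevels. *)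

theory Defs
  imports Main "HOL-Library.Countable"
begin

text \<open>Sublevels over a countable set of variables 'v.
  SA E x S stands for A(E,x,S), SB E S stands for B(E,S).\<close>

datatype 'v sublevel = SA "'v set" 'v nat | SB "'v set" nat

type_synonym 'v valuation = "'v \<Rightarrow> nat"

fun sval :: "'v sublevel \<Rightarrow> 'v valuation \<Rightarrow> nat" where
  "sval (SA E x S) \<sigma> = (if \<exists>y\<in>E. \<sigma> y = 0 then 0 else \<sigma> x + S)"
| "sval (SB E S) \<sigma> = (if \<exists>y\<in>E. \<sigma> y = 0 then 0 else S)"

fun in_Ls :: "'v sublevel \<Rightarrow> bool" where
  "in_Ls (SA E x S) = (finite E \<and> x \<in> E)"
| "in_Ls (SB E S) = (finite E \<and> S > 0)"

definition sub_le :: "'v sublevel \<Rightarrow> 'v sublevel \<Rightarrow> bool" where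
  "sub_le u v = (\<forall>\<sigma>. sval u \<sigma> \<le> sval v \<sigma>)"

definition incomparable :: "'v sublevel \<Rightarrow> 'v sublevel \<Rightarrow> bool" where
  "incomparable u v = (\<not> sub_le u v \<and> \<not> sub_le v u)"

text \<open>A minimal representation max(u_1,...,u_n) is identified with its finite set of sublevels.\<close>
definition in_Lr :: "'v sublevel set \<Rightarrow> bool" where
  "in_Lr U = (finite U \<and> (\<forall>u\<in>U. in_Ls u) \<and>
              (\<forall>u\<in>U. \<forall>v\<in>U. u \<noteq> v \<longrightarrow> incomparable u v))"

definition rval :: "'v sublevel set \<Rightarrow> 'v valuation \<Rightarrow> nat" where
  "rval U \<sigma> = Max (insert 0 ((\<lambda>u. sval u \<sigma>) ` U))"

definition eq_L :: "'v sublevel set \<Rightarrow> 'v sublevel set \<Rightarrow> bool" where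
  "eq_L U V = (\<forall>\<sigma>. rval U \<sigma> = rval V \<sigma>)"

end

theory Submission
  imports Defs
begin

definition vv :: "'v set \<Rightarrow> nat \<Rightarrow> 'v valuation" where
  "vv F c = (\<lambda>y. if y \<in> F then c else 0)"

lemma sval_vvA: "c > 0 \<Longrightarrow> x \<in> E \<Longrightarrow> sval (SA E x S) (vv F c) = (if E \<subseteq> F then c + S else 0)"
  by (auto simp: vv_def)

lemma sval_vvB: "c > 0 \<Longrightarrow> sval (SB E S) (vv F c) = (if E \<subseteq> F then S else 0)"
  by (auto simp: vv_def)

lemma sub_le_B: "E' \<subseteq> E \<Longrightarrow> S \<le> S' \<Longrightarrow> sub_le (SB E S) (SB E' S')"
  unfolding sub_le_def sval.simps by (auto; metis less_numeral_extra(3) subsetD)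

lemma sub_le_A: "E' \<subseteq> E \<Longrightarrow> x \<in> E' \<Longrightarrow> S \<le> S' + 1 \<Longrightarrow> sub_le (SB E S) (SA E' x S')"
  unfolding sub_le_def
proof
  fix \<sigma> :: "'a valuation"
  assume a: "E' \<subseteq> E" "x \<in> E'" "S \<le> S' + 1"
  show "sval (SB E S) \<sigma> \<le> sval (SA E' x S') \<sigma>"
  proof (cases "\<exists>y\<in>E. \<sigma> y = 0")
    case True then show ?thesis by simp
  next
    case False
    then have "\<sigma> x \<ge> 1" using a by (metis less_one not_le subsetD)
    with False a show ?thesis by (auto; blast)
  qed
qed

declare sval.simps[simp del]

lemma small:
  assumes "in_Lr t" "SB E S \<in> t" "u \<in> t" "u \<noteq> SB E S"
  shows "case u of SA E' x S' \<Rightarrow> E' \<subseteq> E \<longrightarrow> S' + 1 < S | SB E' S' \<Rightarrow> E' \<subseteq> E \<longrightarrow> S' < S"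
proof -
  have nle: "\<not> sub_le (SB E S) u" using assms unfolding in_Lr_def incomparable_def by blast
  have ls: "in_Ls u" using assms unfolding in_Lr_def by blast
  show ?thesis
  proof (cases u)
    case (SA E' x S')
    then show ?thesis using nle ls sub_le_A[of E' E x S S'] by (cases "S \<le> S' + 1") auto
  next
    case (SB E' S')
    then show ?thesis using nle assms(4) sub_le_B[of E' E S S'] by (cases "S \<le> S'") auto
  qed
qed

lemma rval_le: "finite t \<Longrightarrow> (\<And>u. u \<in> t \<Longrightarrow> sval u \<sigma> \<le> M) \<Longrightarrow> rval t \<sigma> \<le> M"
  unfolding rval_def by (subst Max_le_iff) auto

lemma rval_ge: "finite t \<Longrightarrow> u \<in> t \<Longrightarrow> sval u \<sigma> \<le> rval t \<sigma>"
  unfolding rval_def by (rule Max_ge) auto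

lemma rval_att: "finite t \<Longrightarrow> rval t \<sigma> > 0 \<Longrightarrow> \<exists>u\<in>t. sval u \<sigma> = rval t \<sigma>"
proof -
  assume f: "finite t" and p: "rval t \<sigma> > 0"
  have "rval t \<sigma> \<in> insert 0 ((\<lambda>u. sval u \<sigma>) ` t)"
    unfolding rval_def by (rule Max_in) (use f in auto)
  with p show ?thesis by auto
qed

lemma step1:
  assumes "in_Lr t" "SB E S \<in> t"
  shows "rval t (vv E 1) = S"
proof (rule antisym)
  have f: "finite t" using assms unfolding in_Lr_def by blast
  show "rval t (vv E 1) \<le> S"
  proof (rule rval_le[OF f])
    fix u assume u: "u \<in> t"
    have ls: "in_Ls u" using assms u unfolding in_Lr_def by blast
    show "sval u (vv E 1) \<le> S"
    proof (cases "u = SB E S")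
      case True then show ?thesis by (simp add: sval_vvB)
    next
      case False
      from small[OF assms u False] ls show ?thesis
        by (cases u) (auto simp: sval_vvA sval_vvB)
    qed
  qed
  show "S \<le> rval t (vv E 1)"
    using rval_ge[OF f assms(2), of "vv E 1"] by (simp add: sval_vvB)
qed

lemma onedir:
  assumes t1: "in_Lr t1" and t2: "in_Lr t2" and eq: "\<And>\<sigma>. rval t1 \<sigma> = rval t2 \<sigma>"
    and B: "SB E S \<in> t1"
  shows "SB E S \<in> t2"
proof -
  have f1: "finite t1" using t1 unfolding in_Lr_def by blast
  have f2: "finite t2" using t2 unfolding in_Lr_def by blast
  have Sp: "S > 0" using t1 B unfolding in_Lr_def by fastforce
  have r2: "rval t2 (vv E 1) = S" using step1[OF t1 B] eq by metis
  obtain u where u: "u \<in> t2" "sval u (vv E 1) = S" using rval_att[OF f2, of "vv E 1"] r2 Sp by auto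
  have ls: "in_Ls u" using t2 u unfolding in_Lr_def by blast
  show ?thesis
  proof (cases u)
    case (SB E' S')
    then have E'E: "E' \<subseteq> E" and S': "S' = S" using u Sp by (auto simp: sval_vvA sval_vvB split: if_splits)
    show ?thesis
    proof (cases "E' = E")
      case True then show ?thesis using u SB S' by simp
    next
      case False
      have "SB E' S \<in> t2" using u SB S' by simp
      from step1[OF t2 this] eq have r1: "rval t1 (vv E' 1) = S" by metis
      obtain v where v: "v \<in> t1" "sval v (vv E' 1) = S" using rval_att[OF f1, of "vv E' 1"] r1 Sp by auto
      have lv: "in_Ls v" using t1 v unfolding in_Lr_def by blast
      have vne: "v \<noteq> SB E S"
      proof
        assume "v = SB E S"
        then have "sval v (vv E' 1) = (if E \<subseteq> E' then S else 0)" by (simp add: sval_vvB)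
        with v Sp have "E \<subseteq> E'" by (auto split: if_splits)
        with False E'E show False by auto
      qed
      from small[OF t1 B v(1) vne] v(2) E'E Sp lv show ?thesis
        by (cases v) (auto simp: sval_vvA sval_vvB split: if_splits)
    qed
  next
    case (SA E' x S')
    then have E'E: "E' \<subseteq> E" and S': "1 + S' = S" and x: "x \<in> E'"
      using u Sp ls by (auto simp: sval_vvA sval_vvB split: if_splits)
    have "sval u (vv E' 2) = S + 1" using SA S' x by (simp add: sval_vvA)
    then have "S + 1 \<le> rval t2 (vv E' 2)" using rval_ge[OF f2 u(1)] by metis
    moreover have "rval t1 (vv E' 2) \<le> S"
    proof (rule rval_le[OF f1])
      fix v assume v: "v \<in> t1"
      have lv: "in_Ls v" using t1 v unfolding in_Lr_def by blast
      show "sval v (vv E' 2) \<le> S"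
      proof (cases "v = SB E S")
        case True then show ?thesis by (simp add: sval_vvB)
      next
        case False
        from small[OF t1 B v False] E'E lv show ?thesis
          by (cases v) (auto simp: sval_vvA sval_vvB)
      qed
    qed
    ultimately show ?thesis using eq by (metis not_less_eq_eq Suc_eq_plus1)
  qed
qed

theorem proposition32:
  fixes t1 t2 :: "('v::countable) sublevel set"
  assumes "in_Lr t1" and "in_Lr t2" and "eq_L t1 t2"
  shows "\<forall>E S. finite E \<longrightarrow> (SB E S \<in> t1 \<longleftrightarrow> SB E S \<in> t2)"
  using onedir[OF assms(1,2)] onedir[OF assms(2,1)] assms(3) unfolding eq_L_def by metis

end
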